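(* The Fomin–Kirillov algebra $\mathcal{E}_3$ admits no truncated point modules of degree greater than $1$; in particular $\mathcal{P}_2(\mathcal{E}_3)=\emptyset$.
   Context: Over an algebraically closed field $k$, $\mathcal{E}_3$ is the graded algebra generated by degree-$1$ elements $x_{12},x_{13},x_{23}$ subject to $x_{12}^2=x_{13}^2=x_{23}^2=0$, $x_{12}x_{23}-x_{23}x_{13}-x_{13}x_{12}=0$ and $x_{23}x_{12}-x_{13}x_{23}-x_{12}x_{13}=0$. A degree-$d$ truncated point module over a connected graded algebra $A$ generated in degree $1$ is a graded cyclic module generated in degree $0$ with Hilbert series $1+t+\cdots+t^d$; $\mathcal{P}_d(A)$ is the space of such modules. *)

theory Defs
  imports "HOL-Computational_Algebra.Polynomial"
begin

datatype gen = X12 | X13 | X23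

text \<open>Noncommutative polynomials in the generators (elements of the free algebra
  k<x12,x13,x23>), as formal linear combinations of words.  The word [g1,...,gn]
  stands for the monomial g1 g2 ... gn.\<close>
type_synonym 'k ncpoly = "('k \<times> gen list) list"

definition E3_relations :: "'k::field ncpoly list" where
  "E3_relations =
    [ [(1, [X12, X12])],
      [(1, [X13, X13])],
      [(1, [X23, X23])],
      [(1, [X12, X23]), (-1, [X23, X13]), (-1, [X13, X12])],
      [(1, [X23, X12]), (-1, [X13, X23]), (-1, [X12, X13])] ]"

text \<open>A graded module M = M_0 + ... + M_d with every M_j one-dimensional
  (Hilbert series 1 + t + ... + t^d), M_j = 0 for j > d.  Identifying each M_j with k
  (via a choice of basis vector m_j), a graded left module structure over the free
  algebra is given by the degree-one actions: generator g maps m_j to act j g * m_(j+1)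
  for j < d (and M_d to M_(d+1) = 0).\<close>

text \<open>Scalar by which the word w maps M_j to M_(j + length w) (0 if out of range).\<close>
fun word_act :: "nat \<Rightarrow> (nat \<Rightarrow> gen \<Rightarrow> 'k::field) \<Rightarrow> gen list \<Rightarrow> nat \<Rightarrow> 'k" where
  "word_act d act [] j = (if j \<le> d then 1 else 0)"
| "word_act d act (g # w) j =
     (if j + length w < d then act (j + length w) g * word_act d act w j else 0)"

definition annihilates :: "nat \<Rightarrow> (nat \<Rightarrow> gen \<Rightarrow> 'k::field) \<Rightarrow> 'k ncpoly \<Rightarrow> bool" where
  "annihilates d act p \<longleftrightarrow>
     (\<forall>j n. (\<Sum>(c, w) \<leftarrow> filter (\<lambda>(c, w). length w = n) p. c * word_act d act w j) = 0)"

text \<open>Truncated point module of degree d over E_3: the graded module above is a module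
  over E_3 (i.e. killed by the defining relations, hence by the two-sided ideal they
  generate) and is cyclic generated in degree 0 (M_j = (E_3)_j M_0 for all j \<le> d).\<close>
definition is_truncated_point_module_E3 :: "nat \<Rightarrow> (nat \<Rightarrow> gen \<Rightarrow> 'k::field) \<Rightarrow> bool" where
  "is_truncated_point_module_E3 d act \<longleftrightarrow>
     (\<forall>r \<in> set E3_relations. annihilates d act r) \<and>
     (\<forall>j \<le> d. \<exists>w. length w = j \<and> word_act d act w 0 \<noteq> 0)"

definition P_E3 :: "nat \<Rightarrow> (nat \<Rightarrow> gen \<Rightarrow> 'k::field) set" where
  "P_E3 d = {act. is_truncated_point_module_E3 d act}"

end

theory Submission
  imports Defs
begin

lemma key:
  fixes a1 a2 a3 b1 b2 b3 :: "'k::field"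
  assumes "b1 * a1 = 0" "b2 * a2 = 0" "b3 * a3 = 0"
    "b1 * a3 - b3 * a2 - b2 * a1 = 0"
    "b3 * a1 - b2 * a3 - b1 * a2 = 0"
    "a1 \<noteq> 0 \<or> a2 \<noteq> 0 \<or> a3 \<noteq> 0"
    "b1 \<noteq> 0 \<or> b2 \<noteq> 0 \<or> b3 \<noteq> 0"
  shows False
proof (cases "a1 = 0")
  case False
  then have "b1 = 0" using assms(1) by simp
  show False
  proof (cases "a2 = 0")
    case True
    then have "b2 = 0" using assms(4) \<open>b1 = 0\<close> False by simp
    then have "b3 = 0" using assms(5) \<open>b1 = 0\<close> False by simp
    then show False using assms(7) \<open>b1 = 0\<close> \<open>b2 = 0\<close> by simp
  next
    case F2: False
    then have "b2 = 0" using assms(2) by simp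
    then have "b3 = 0" using assms(4) \<open>b1 = 0\<close> F2 by simp
    then show False using assms(7) \<open>b1 = 0\<close> \<open>b2 = 0\<close> by simp
  qed
next
  case a1: True
  show False
  proof (cases "a2 = 0")
    case False
    then have "b2 = 0" using assms(2) by simp
    then have "b1 = 0" using assms(5) a1 False by simp
    then have "b3 = 0" using assms(4) \<open>b2 = 0\<close> False by simp
    then show False using assms(7) \<open>b1 = 0\<close> \<open>b2 = 0\<close> by simp
  next
    case True
    then have a3: "a3 \<noteq> 0" using a1 assms(6) by simp
    then have "b3 = 0" using assms(3) by simp
    have "b1 = 0" using assms(4) a1 True a3 by simp
    have "b2 = 0" using assms(5) a1 True a3 by simp
    show False using assms(7) \<open>b1 = 0\<close> \<open>b2 = 0\<close> \<open>b3 = 0\<close> by simp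
  qed
qed

theorem proposition2p1:
  fixes d :: nat
  assumes "d > 1"
  shows "(P_E3 d :: (nat \<Rightarrow> gen \<Rightarrow> 'k::alg_closed_field) set) = {}"
proof (rule ccontr)
  assume "(P_E3 d :: (nat \<Rightarrow> gen \<Rightarrow> 'k::alg_closed_field) set) \<noteq> {}"
  then obtain act :: "nat \<Rightarrow> gen \<Rightarrow> 'k" where "act \<in> P_E3 d" by blast
  then have rel: "\<forall>r \<in> set E3_relations. annihilates d act r"
    and cyc: "\<forall>j \<le> d. \<exists>w. length w = j \<and> word_act d act w 0 \<noteq> 0"
    unfolding P_E3_def is_truncated_point_module_E3_def by auto
  have ann: "\<And>r. r \<in> set E3_relations \<Longrightarrow>
     (\<Sum>(c, w) \<leftarrow> filter (\<lambda>(c, w). length w = 2) r. c * word_act d act w 0) = 0"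
    using rel unfolding annihilates_def by blast
  have e: "(\<Sum>(c, w) \<leftarrow> filter (\<lambda>(c, w). length w = 2) r. c * word_act d act w 0) = 0"
    if "r \<in> set (E3_relations :: 'k ncpoly list)" for r using ann that by blast
  have s: "set (E3_relations :: 'k ncpoly list) = {[(1, [X12, X12])],
      [(1, [X13, X13])],
      [(1, [X23, X23])],
      [(1, [X12, X23]), (-1, [X23, X13]), (-1, [X13, X12])],
      [(1, [X23, X12]), (-1, [X13, X23]), (-1, [X12, X13])]}"
    unfolding E3_relations_def by simp
  have d1: "0 < d" "1 < d" using assms by auto
  have r1: "act 1 X12 * act 0 X12 = 0" using e[of "[(1, [X12, X12])]"] d1 unfolding s by (simp add: algebra_simps)
  have r2: "act 1 X13 * act 0 X13 = 0" using e[of "[(1, [X13, X13])]"] d1 unfolding s by (simp add: algebra_simps)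
  have r3: "act 1 X23 * act 0 X23 = 0" using e[of "[(1, [X23, X23])]"] d1 unfolding s by (simp add: algebra_simps)
  have r4: "act 1 X12 * act 0 X23 - act 1 X23 * act 0 X13 - act 1 X13 * act 0 X12 = 0"
    using e[of "[(1, [X12, X23]), (-1, [X23, X13]), (-1, [X13, X12])]"] d1 unfolding s by (simp add: algebra_simps)
  have r5: "act 1 X23 * act 0 X12 - act 1 X13 * act 0 X23 - act 1 X12 * act 0 X13 = 0"
    using e[of "[(1, [X23, X12]), (-1, [X13, X23]), (-1, [X12, X13])]"] d1 unfolding s by (simp add: algebra_simps)
  obtain w where w: "length w = 2" "word_act d act w 0 \<noteq> 0" using cyc assms by (metis Suc_leI one_add_one plus_1_eq_Suc)
  then obtain g h where gh: "w = [g, h]"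
    by (metis (no_types, lifting) One_nat_def Suc_length_conv length_0_conv numeral_2_eq_2)
  have "act 1 g \<noteq> 0" "act 0 h \<noteq> 0" using w(2) d1 unfolding gh by auto
  then have A: "act 0 X12 \<noteq> 0 \<or> act 0 X13 \<noteq> 0 \<or> act 0 X23 \<noteq> 0"
    and B: "act 1 X12 \<noteq> 0 \<or> act 1 X13 \<noteq> 0 \<or> act 1 X23 \<noteq> 0"
    by (cases g; cases h; auto)+
  show False using key[OF r1 r2 r3 _ _ A B] r4 r5 by (simp add: algebra_simps)
qed

end
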